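(* Let $\mathcal{C} \subseteq \mathcal{L}(M_n)$ be a right-CP-invariant convex cone. Then for a linear map $\Psi: M_n\to M_n$, we have $\Psi^{\dagger} \circ \Phi \in \mathcal{CP}(M_n)$ for all $\Phi \in \mathcal{C}$ if and only if $\Psi \in \mathcal{C}^{\circ}$.
   Context: $M_n$ is the space of $n\times n$ complex matrices, $\mathcal{L}(M_n)$ the space of linear maps $M_n\to M_n$, and $\mathcal{CP}(M_n)$ the cone of completely positive maps on $M_n$. For $\Phi\in\mathcal L(M_n)$, $\Phi^\dagger$ is the linear map with $\mathrm{Tr}(\Phi(X)Y)=\mathrm{Tr}(X\Phi^\dagger(Y))$ for all $X,Y\in M_n$. With $\{\mathbf e_i\}$ the standard basis of $\mathbb{C}^n$ and $E=\sum_{i,j=1}^n \mathbf e_i\mathbf e_j^*\otimes\mathbf e_i\mathbf e_j^*$, the Choi matrix of $\Phi$ is $C_\Phi = (\mathrm{id}_n\otimes\Phi)(E)$. The dual cone of a cone $\mathcal C\subseteq\mathcal L(M_n)$ is $\mathcal{C}^\circ = \{\Psi\in\mathcal L(M_n) : \mathrm{Tr}(C_\Phi C_\Psi)\ge 0 \text{ for all }\Phi\in\mathcal C\}$. A cone $\mathcal C\subseteq\mathcal L(M_n)$ is right-CP-invariant if $\Omega\circ\Psi\in\mathcal C$ whenever $\Omega\in\mathcal C$ and $\Psi\in\mathcal{CP}(M_n)$. *)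

theory Defs
  imports "HOL-Analysis.Analysis"
begin

text \<open>M_n is modelled as the type complex^'n^'n for a finite index type 'n
  (n = CARD('n)). Linear maps M_n -> M_n are complex-linear functions on this type.\<close>

type_synonym 'n mat = "complex^'n^'n"

definition cnonneg :: "complex \<Rightarrow> bool" where
  "cnonneg z \<longleftrightarrow> Im z = 0 \<and> 0 \<le> Re z"

definition mscale :: "complex \<Rightarrow> complex^'m^'k \<Rightarrow> complex^'m^'k" where
  "mscale c A = (\<chi> i j. c * A $ i $ j)"

definition mlinear :: "('n::finite mat \<Rightarrow> 'n mat) \<Rightarrow> bool" where
  "mlinear \<Phi> \<longleftrightarrow> (\<forall>X Y. \<Phi> (X + Y) = \<Phi> X + \<Phi> Y) \<and> (\<forall>c X. \<Phi> (mscale c X) = mscale c (\<Phi> X))"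

definition mtrace :: "complex^'n^'n \<Rightarrow> complex" where
  "mtrace A = (\<Sum>i\<in>UNIV. A $ i $ i)"

definition map_dual :: "('n::finite mat \<Rightarrow> 'n mat) \<Rightarrow> ('n mat \<Rightarrow> 'n mat)" where
  "map_dual \<Phi> = (THE \<Psi>. mlinear \<Psi> \<and> (\<forall>X Y. mtrace (\<Phi> X ** Y) = mtrace (X ** \<Psi> Y)))"

definition munit :: "'n \<Rightarrow> 'n \<Rightarrow> 'n::finite mat" where
  "munit i j = (\<chi> a b. if a = i \<and> b = j then 1 else 0)"

definition kron :: "complex^'n^'n \<Rightarrow> complex^'m^'m \<Rightarrow> complex^('n \<times> 'm)^('n \<times> 'm)" where
  "kron A B = (\<chi> p q. A $ fst p $ fst q * B $ snd p $ snd q)"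

definition choi :: "('n::finite mat \<Rightarrow> 'n mat) \<Rightarrow> complex^('n \<times> 'n)^('n \<times> 'n)" where
  "choi \<Phi> = (\<Sum>i\<in>UNIV. \<Sum>j\<in>UNIV. kron (munit i j) (\<Phi> (munit i j)))"

text \<open>Positive semidefiniteness of a k x k block matrix with blocks in M_n
  (i.e. an element of M_k(M_n) = M_{kn}); only blocks with indices < k matter.\<close>
definition psd_blocks :: "nat \<Rightarrow> (nat \<Rightarrow> nat \<Rightarrow> 'n::finite mat) \<Rightarrow> bool" where
  "psd_blocks k X \<longleftrightarrow> (\<forall>v :: nat \<Rightarrow> complex^'n.
     cnonneg (\<Sum>i<k. \<Sum>j<k. \<Sum>a\<in>UNIV. \<Sum>b\<in>UNIV. cnj (v i $ a) * X i j $ a $ b * v j $ b))"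

text \<open>Completely positive: linear and id_k \<otimes> Phi is positive for every k.\<close>
definition completely_positive :: "('n::finite mat \<Rightarrow> 'n mat) \<Rightarrow> bool" where
  "completely_positive \<Phi> \<longleftrightarrow> mlinear \<Phi> \<and>
     (\<forall>k X. psd_blocks k X \<longrightarrow> psd_blocks k (\<lambda>i j. \<Phi> (X i j)))"

definition CP :: "('n::finite mat \<Rightarrow> 'n mat) set" where
  "CP = {\<Phi>. completely_positive \<Phi>}"

definition convex_map_cone :: "('n::finite mat \<Rightarrow> 'n mat) set \<Rightarrow> bool" where
  "convex_map_cone C \<longleftrightarrow> C \<subseteq> {\<Phi>. mlinear \<Phi>} \<and>
     (\<forall>\<Phi>\<in>C. \<forall>\<Psi>\<in>C. \<forall>a b :: real. 0 \<le> a \<longrightarrow> 0 \<le> b \<longrightarrow>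
        (\<lambda>X. mscale (complex_of_real a) (\<Phi> X) + mscale (complex_of_real b) (\<Psi> X)) \<in> C)"

definition right_CP_invariant :: "('n::finite mat \<Rightarrow> 'n mat) set \<Rightarrow> bool" where
  "right_CP_invariant C \<longleftrightarrow> (\<forall>\<Omega>\<in>C. \<forall>\<Psi>\<in>CP. \<Omega> \<circ> \<Psi> \<in> C)"

definition dual_cone :: "('n::finite mat \<Rightarrow> 'n mat) set \<Rightarrow> ('n mat \<Rightarrow> 'n mat) set" where
  "dual_cone C = {\<Psi>. mlinear \<Psi> \<and> (\<forall>\<Phi>\<in>C. cnonneg (mtrace (choi \<Phi> ** choi \<Psi>)))}"

end

theory Submission
  imports Defs "HOL-Library.Complex_Order"
begin


definition qform :: "'x set \<Rightarrow> ('x \<Rightarrow> 'x \<Rightarrow> complex) \<Rightarrow> ('x \<Rightarrow> complex) \<Rightarrow> complex" where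
  "qform S A z = (\<Sum>u\<in>S. \<Sum>v\<in>S. cnj (z u) * A u v * z v)"

definition psdk :: "'x set \<Rightarrow> ('x \<Rightarrow> 'x \<Rightarrow> complex) \<Rightarrow> bool" where
  "psdk S A \<longleftrightarrow> (\<forall>z. 0 \<le> qform S A z)"

lemma cnonneg_iff: "cnonneg z \<longleftrightarrow> 0 \<le> z"
  by (auto simp: cnonneg_def less_eq_complex_def)

lemma sum_two:
  fixes f :: "'a \<Rightarrow> complex"
  assumes "finite S" "x\<in>S" "y\<in>S" "x\<noteq>y"
  shows "(\<Sum>v\<in>S. f v * (if v=x then a else if v=y then b else 0)) = f x * a + f y * b"
proof -
  have "(\<Sum>v\<in>S. f v * (if v=x then a else if v=y then b else 0)) =
        (\<Sum>v\<in>S. (if v = x then f v * a else 0) + (if v = y then f v * b else 0))"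
    by (rule sum.cong) (use assms in auto)
  also have "\<dots> = f x * a + f y * b" using assms by (simp add: sum.distrib)
  finally show ?thesis .
qed

lemma sum_two':
  fixes f :: "'a \<Rightarrow> complex"
  assumes "finite S" "x\<in>S" "y\<in>S" "x\<noteq>y"
  shows "(\<Sum>v\<in>S. cnj (if v=x then a else if v=y then b else 0) * f v) = cnj a * f x + cnj b * f y"
proof -
  have "(\<Sum>v\<in>S. cnj (if v=x then a else if v=y then b else 0) * f v) =
        (\<Sum>v\<in>S. (if v = x then cnj a * f v else 0) + (if v = y then cnj b * f v else 0))"
    by (rule sum.cong) (use assms in auto)
  also have "\<dots> = cnj a * f x + cnj b * f y" using assms by (simp add: sum.distrib)
  finally show ?thesis .
qed

lemma qform_two:
  assumes "finite S" "x\<in>S" "y\<in>S" "x\<noteq>y"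
  shows "qform S A (\<lambda>u. if u=x then a else if u=y then b else 0) =
     cnj a*A x x*a + cnj a*A x y*b + cnj b*A y x*a + cnj b*A y y*b"
proof -
  let ?z = "\<lambda>u. if u=x then a else if u=y then b else 0"
  have "qform S A ?z = (\<Sum>u\<in>S. cnj (?z u) * (A u x * a + A u y * b))"
    unfolding qform_def
    by (rule sum.cong[OF refl], subst sum_two[symmetric, OF assms])
       (simp add: sum_distrib_left mult.assoc)
  also have "\<dots> = cnj a * (A x x * a + A x y * b) + cnj b * (A y x * a + A y y * b)"
    by (rule sum_two'[OF assms])
  finally show ?thesis by (simp add: algebra_simps)
qed

lemma qform_one:
  assumes "finite S" "x\<in>S"
  shows "qform S A (\<lambda>u. if u=x then a else 0) = cnj a*A x x*a"
proof -
  have "qform S A (\<lambda>u. if u=x then a else 0) = (\<Sum>u\<in>S. (if u = x then cnj a * A x x * a else 0))"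
    unfolding qform_def
    by (rule sum.cong[OF refl]) (use assms in \<open>auto simp: if_distrib cong: if_cong\<close>)
  then show ?thesis using assms by (subst (asm) sum.delta) auto
qed

lemma nonneg_Im: "0 \<le> (z::complex) \<Longrightarrow> Im z = 0"
  by (simp add: less_eq_complex_def)

lemma psdk_diag: "psdk S A \<Longrightarrow> finite S \<Longrightarrow> x\<in>S \<Longrightarrow> 0 \<le> A x x"
  using qform_one[of S x A 1] unfolding psdk_def by (metis complex_cnj_one mult_1 mult_1_right)

lemma psdk_herm:
  assumes "psdk S A" "finite S" "x\<in>S" "y\<in>S"
  shows "A x y = cnj (A y x)"
proof (cases "x = y")
  case True
  then show ?thesis using psdk_diag[OF assms(1,2,3)] nonneg_Im by (simp add: complex_eq_iff)
next
  case False
  have dx: "Im (A x x) = 0" "Im (A y y) = 0"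
    using psdk_diag[OF assms(1,2)] assms nonneg_Im by auto
  have "0 \<le> qform S A (\<lambda>u. if u=x then 1 else if u=y then 1 else 0)"
    using assms(1) unfolding psdk_def by blast
  then have "0 \<le> A x x + A x y + A y x + A y y"
    using qform_two[OF assms(2,3,4) False, of A 1 1] by simp
  then have "Im (A x x + A x y + A y x + A y y) = 0" by (rule nonneg_Im)
  then have 1: "Im (A x y) + Im (A y x) = 0" using dx by simp
  have "0 \<le> qform S A (\<lambda>u. if u=x then 1 else if u=y then \<i> else 0)"
    using assms(1) unfolding psdk_def by blast
  then have "0 \<le> A x x + A x y * \<i> - \<i> * A y x + A y y"
    using qform_two[OF assms(2,3,4) False, of A 1 \<i>] by (simp add: algebra_simps)
  then have "Im (A x x + A x y * \<i> - \<i> * A y x + A y y) = 0" by (rule nonneg_Im)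
  then have 2: "Re (A x y) - Re (A y x) = 0" using dx by simp
  show ?thesis using 1 2 by (simp add: complex_eq_iff)
qed

lemma sum_restrict0:
  fixes f :: "'a \<Rightarrow> complex"
  assumes "finite T" "S \<subseteq> T"
  shows "(\<Sum>v\<in>T. f v * (if v \<in> S then z v else 0)) = (\<Sum>v\<in>S. f v * z v)"
proof -
  have "(\<Sum>v\<in>T. f v * (if v \<in> S then z v else 0)) = (\<Sum>v\<in>T. if v \<in> S then f v * z v else 0)"
    by (rule sum.cong) auto
  also have "\<dots> = (\<Sum>v\<in>T \<inter> S. f v * z v)" using assms by (simp add: sum.inter_restrict)
  also have "T \<inter> S = S" using assms by auto
  finally show ?thesis .
qed

lemma qform_restrict:
  assumes "finite T" "S \<subseteq> T"
  shows "qform T A (\<lambda>u. if u \<in> S then z u else 0) = qform S A z"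
proof -
  have "qform T A (\<lambda>u. if u \<in> S then z u else 0) =
     (\<Sum>u\<in>T. (if u \<in> S then cnj (z u) else 0) * (\<Sum>v\<in>S. A u v * z v))"
    unfolding qform_def
    by (rule sum.cong[OF refl], subst sum_restrict0[symmetric, OF assms])
      (auto simp: sum_distrib_left mult.assoc)
  also have "\<dots> = (\<Sum>u\<in>T. (\<Sum>v\<in>S. A u v * z v) * (if u \<in> S then cnj (z u) else 0))"
    by (simp add: mult.commute)
  also have "\<dots> = (\<Sum>u\<in>S. (\<Sum>v\<in>S. A u v * z v) * cnj (z u))"
    by (rule sum_restrict0[OF assms])
  also have "\<dots> = qform S A z" unfolding qform_def
    by (simp add: sum_distrib_left sum_distrib_right algebra_simps)
  finally show ?thesis .
qed

lemma psdk_mono: "finite T \<Longrightarrow> S \<subseteq> T \<Longrightarrow> psdk T A \<Longrightarrow> psdk S A"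
  unfolding psdk_def by (metis qform_restrict)



lemma psdk_zero_row:
  assumes "psdk S A" "finite S" "x\<in>S" "y\<in>S" "A x x = 0"
  shows "A x y = 0"
proof (rule ccontr)
  assume c0: "A x y \<noteq> 0"
  then have "x \<noteq> y" using assms by auto
  define c where "c = A x y"
  define s where "s = (Re (A y y) + 1) / (2 * (cmod c)^2)"
  have cpos: "(cmod c)^2 > 0" using c0 c_def by simp
  define t where "t = - complex_of_real s * c"
  have hyx: "A y x = cnj c" using psdk_herm[OF assms(1,2,4,3)] c_def by simp
  have "0 \<le> qform S A (\<lambda>u. if u=x then t else if u=y then 1 else 0)"
    using assms(1) unfolding psdk_def by blast
  also have "\<dots> = cnj t * c + cnj c * t + A y y"
    using qform_two[OF assms(2,3,4) \<open>x\<noteq>y\<close>, of A t 1] assms(5) hyx c_def by simp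
  finally have "0 \<le> Re (cnj t * c + cnj c * t + A y y)" by (simp add: less_eq_complex_def)
  moreover have "Re (cnj t * c + cnj c * t + A y y) = Re (A y y) - 2 * s * ((Re c)^2 + (Im c)^2)"
    unfolding t_def by (simp add: algebra_simps power2_eq_square)
  moreover have "(cmod c)^2 = (Re c)^2 + (Im c)^2" by (simp add: cmod_power2)
  moreover have "2 * s * (cmod c)^2 = Re (A y y) + 1" unfolding s_def using cpos by simp
  ultimately show False by simp
qed

lemma schur:
  "finite S \<Longrightarrow> psdk S A \<Longrightarrow> psdk S B \<Longrightarrow> 0 \<le> (\<Sum>u\<in>S. \<Sum>v\<in>S. A u v * B u v)"
proof (induction S arbitrary: A rule: finite_induct)
  case empty
  then show ?case by simp
next
  case (insert x S)
  let ?S' = "insert x S"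
  have fin: "finite ?S'" using insert by simp
  have pB: "psdk S B" using psdk_mono[OF fin _ insert.prems(2)] by blast
  have ax: "0 \<le> A x x" using psdk_diag[OF insert.prems(1) fin] by simp
  show ?case
  proof (cases "A x x = 0")
    case True
    have row: "A x v = 0" if "v \<in> ?S'" for v
      using psdk_zero_row[OF insert.prems(1) fin _ that True] by simp
    have col: "A u x = 0" if "u \<in> ?S'" for u
      using psdk_herm[OF insert.prems(1) fin that, of x] row[of u] that by simp
    have "(\<Sum>u\<in>?S'. \<Sum>v\<in>?S'. A u v * B u v) = (\<Sum>u\<in>S. \<Sum>v\<in>S. A u v * B u v)"
      using insert.hyps row col by (simp add: sum.insert)
    moreover have "0 \<le> (\<Sum>u\<in>S. \<Sum>v\<in>S. A u v * B u v)"
      using insert.IH[OF psdk_mono[OF fin _ insert.prems(1)] pB] by blast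
    ultimately show ?thesis by simp
  next
    case False
    define r where "r = Re (A x x)"
    have axr: "A x x = complex_of_real r" using ax unfolding r_def
      by (simp add: less_eq_complex_def complex_eq_iff)
    have rpos: "r > 0" using ax False axr by (simp add: less_eq_complex_def)
    define A' where "A' u v = A u v - A u x * A x v / A x x" for u v
    have herm: "A x v = cnj (A v x)" if "v \<in> ?S'" for v
      using psdk_herm[OF insert.prems(1) fin _ that] by simp
    have pt: "A u v * B u v = A' u v * B u v + complex_of_real (1/r) * (A u x * A x v * B u v)" for u v
      unfolding A'_def axr using rpos by (simp add: field_simps)
    have eq: "(\<Sum>u\<in>?S'. \<Sum>v\<in>?S'. A u v * B u v) = (\<Sum>u\<in>?S'. \<Sum>v\<in>?S'. A' u v * B u v)
        + complex_of_real (1/r) * (\<Sum>u\<in>?S'. \<Sum>v\<in>?S'. A u x * A x v * B u v)"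
      by (simp add: pt sum.distrib sum_distrib_left)
    have A'r: "A' x v = 0" for v unfolding A'_def using False by simp
    have A'c: "A' u x = 0" for u unfolding A'_def using False by simp
    have red: "(\<Sum>u\<in>?S'. \<Sum>v\<in>?S'. A' u v * B u v) = (\<Sum>u\<in>S. \<Sum>v\<in>S. A' u v * B u v)"
      using insert.hyps A'r A'c by (simp add: sum.insert)
    have rank: "(\<Sum>u\<in>?S'. \<Sum>v\<in>?S'. A u x * A x v * B u v) = qform ?S' B (\<lambda>v. cnj (A v x))"
      unfolding qform_def
      by (rule sum.cong[OF refl], rule sum.cong[OF refl]) (simp add: herm)
    have rank0: "0 \<le> (\<Sum>u\<in>?S'. \<Sum>v\<in>?S'. A u x * A x v * B u v)"
      using rank insert.prems(2) unfolding psdk_def by simp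
    have pA': "psdk S A'"
      unfolding psdk_def
    proof
      fix z
      define q where "q = (\<Sum>v\<in>S. A x v * z v)"
      define p where "p = (\<Sum>u\<in>S. cnj (z u) * A u x)"
      define t where "t = - q / A x x"
      have e1: "qform S A' z = qform S A z - p * q / A x x"
        unfolding qform_def A'_def p_def q_def
        by (simp add: algebra_simps sum_subtractf sum_distrib_left sum_distrib_right sum_divide_distrib)
      define w where "w = z(x := t)"
      have wx: "w x = t" unfolding w_def by simp
      have wS: "w u = z u" if "u \<in> S" for u unfolding w_def using that insert.hyps by auto
      have e2a: "qform ?S' A w = cnj (w x) * A x x * w x + (\<Sum>v\<in>S. cnj (w x) * A x v * w v)
          + ((\<Sum>u\<in>S. cnj (w u) * A u x * w x) + qform S A w)"
        unfolding qform_def using insert.hyps by (simp add: sum.insert sum.distrib)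
      have e2b: "qform S A w = qform S A z" unfolding qform_def
        by (rule sum.cong[OF refl], rule sum.cong[OF refl]) (simp add: wS)
      have e2c: "(\<Sum>v\<in>S. cnj (w x) * A x v * w v) = cnj t * q"
        unfolding q_def wx sum_distrib_left by (rule sum.cong[OF refl]) (simp add: wS mult.assoc)
      have e2d: "(\<Sum>u\<in>S. cnj (w u) * A u x * w x) = p * t"
        unfolding p_def wx sum_distrib_right by (rule sum.cong[OF refl]) (simp add: wS)
      have e2: "qform ?S' A (z(x := t)) = cnj t * A x x * t + cnj t * q + p * t + qform S A z"
        using e2a e2b e2c e2d wx unfolding w_def[symmetric] by simp
      have e3: "qform S A z - p*q/A x x = cnj t * A x x * t + cnj t * q + p * t + qform S A z"
        unfolding t_def axr using rpos by (simp add: field_simps)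
      have "qform S A' z = qform ?S' A (z(x := t))"
        using e1 e2 e3 by simp
      then show "0 \<le> qform S A' z" using insert.prems(1) unfolding psdk_def by simp
    qed
    have "0 \<le> (\<Sum>u\<in>S. \<Sum>v\<in>S. A' u v * B u v)" using insert.IH[OF pA' pB] .
    moreover have "0 \<le> complex_of_real (1/r)" using rpos by (simp add: less_eq_complex_def)
    moreover note rank0
    ultimately have "0 \<le> (\<Sum>u\<in>S. \<Sum>v\<in>S. A' u v * B u v)
        + complex_of_real (1/r) * (\<Sum>u\<in>?S'. \<Sum>v\<in>?S'. A u x * A x v * B u v)"
      by (intro add_nonneg_nonneg mult_nonneg_nonneg)
    then show ?thesis unfolding eq red .
  qed
qed



lemma sum4_swap: "(\<Sum>a\<in>A. \<Sum>b\<in>B. \<Sum>c\<in>C. \<Sum>d\<in>D. f a b c d) = (\<Sum>c\<in>C. \<Sum>d\<in>D. \<Sum>a\<in>A. \<Sum>b\<in>B. f a b c d)"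
proof -
  have "(\<Sum>a\<in>A. \<Sum>b\<in>B. \<Sum>c\<in>C. \<Sum>d\<in>D. f a b c d) = (\<Sum>a\<in>A. \<Sum>c\<in>C. \<Sum>b\<in>B. \<Sum>d\<in>D. f a b c d)"
    by (rule sum.cong[OF refl]) (rule sum.swap)
  also have "\<dots> = (\<Sum>c\<in>C. \<Sum>a\<in>A. \<Sum>b\<in>B. \<Sum>d\<in>D. f a b c d)" by (rule sum.swap)
  also have "\<dots> = (\<Sum>c\<in>C. \<Sum>a\<in>A. \<Sum>d\<in>D. \<Sum>b\<in>B. f a b c d)"
    by (rule sum.cong[OF refl], rule sum.cong[OF refl]) (rule sum.swap)
  also have "\<dots> = (\<Sum>c\<in>C. \<Sum>d\<in>D. \<Sum>a\<in>A. \<Sum>b\<in>B. f a b c d)"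
    by (rule sum.cong[OF refl]) (rule sum.swap)
  finally show ?thesis .
qed

lemma sum4_mid: "(\<Sum>a\<in>A. \<Sum>b\<in>B. \<Sum>c\<in>C. \<Sum>d\<in>D. f a b c d) = (\<Sum>a\<in>A. \<Sum>c\<in>C. \<Sum>b\<in>B. \<Sum>d\<in>D. f a b c d)"
    by (rule sum.cong[OF refl]) (rule sum.swap)

lemma mscale_nth[simp]: "mscale c A $ i $ j = c * A $ i $ j"
  by (simp add: mscale_def)

lemma munit_nth[simp]: "munit i j $ a $ b = (if a = i \<and> b = j then 1 else 0)"
  by (simp add: munit_def)

lemma mlinear_add: "mlinear L \<Longrightarrow> L (X + Y) = L X + L Y"
  by (simp add: mlinear_def)

lemma mlinear_scale: "mlinear L \<Longrightarrow> L (mscale c X) = mscale c (L X)"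
  by (simp add: mlinear_def)

lemma mlinear_zero: "mlinear L \<Longrightarrow> L 0 = 0"
  using mlinear_add[of L 0 0] by simp

lemma mlinear_sum:
  assumes "mlinear L" "finite S" shows "L (\<Sum>x\<in>S. f x) = (\<Sum>x\<in>S. L (f x))"
  using assms(2) by (induction S rule: finite_induct) (simp_all add: mlinear_zero[OF assms(1)] mlinear_add[OF assms(1)])

lemma sum_delta2:
  fixes f :: "'a::finite \<Rightarrow> 'b::finite \<Rightarrow> 'c::comm_monoid_add"
  shows "(\<Sum>c\<in>UNIV. \<Sum>d\<in>UNIV. if c = a then if d = b then f c d else 0 else 0) = f a b"
proof -
  have "(\<Sum>d\<in>UNIV. if c = a then if d = b then f c d else 0 else 0) = (if c = a then f c b else 0)" for c
    by (cases "c = a") simp_all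
  then show ?thesis by simp
qed

lemma mat_decomp: "(X::'n::finite mat) = (\<Sum>c\<in>UNIV. \<Sum>d\<in>UNIV. mscale (X$c$d) (munit c d))"
proof -
  have "(\<Sum>c\<in>UNIV. \<Sum>d\<in>UNIV. mscale (X$c$d) (munit c d)) $ a $ b = X $ a $ b" for a b
  proof -
    have "(\<Sum>c\<in>UNIV. \<Sum>d\<in>UNIV. mscale (X$c$d) (munit c d)) $ a $ b
        = (\<Sum>c\<in>UNIV. \<Sum>d\<in>UNIV. if c = a then (if d = b then X$c$d else 0) else 0)"
      by (simp add: sum_component) (rule sum.cong[OF refl], rule sum.cong[OF refl], auto)
    also have "\<dots> = X $ a $ b" by (rule sum_delta2)
    finally show ?thesis .
  qed
  then show ?thesis by (simp add: vec_eq_iff)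
qed

lemma mlinear_entry:
  assumes "mlinear L"
  shows "L X $ a $ b = (\<Sum>c\<in>UNIV. \<Sum>d\<in>UNIV. X$c$d * L (munit c d) $ a $ b)"
proof -
  have "L X = (\<Sum>c\<in>UNIV. \<Sum>d\<in>UNIV. mscale (X$c$d) (L (munit c d)))"
    apply (subst mat_decomp[of X])
    using assms by (simp add: mlinear_sum mlinear_scale)
  then show ?thesis by (simp add: sum_component)
qed

lemma mtrace_mult: "mtrace (A ** B) = (\<Sum>i\<in>UNIV. \<Sum>k\<in>UNIV. A$i$k * B$k$i)"
  by (simp add: mtrace_def matrix_matrix_mult_def)

lemma mtrace_comm: "mtrace (A ** B) = mtrace (B ** (A::complex^'n::finite^'n))"
  unfolding mtrace_mult by (subst sum.swap) (simp add: mult.commute)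

lemma mtrace_munit: "mtrace (munit b a ** M) = M$a$b"
proof -
  have "mtrace (munit b a ** M) = (\<Sum>i\<in>UNIV. \<Sum>k\<in>UNIV. if i = b then (if k = a then M$k$i else 0) else 0)"
    unfolding mtrace_mult by (rule sum.cong[OF refl], rule sum.cong[OF refl]) auto
  also have "\<dots> = M$a$b" by (rule sum_delta2)
  finally show ?thesis .
qed

definition dualmap :: "('n::finite mat \<Rightarrow> 'n mat) \<Rightarrow> ('n mat \<Rightarrow> 'n mat)" where
  "dualmap \<Psi> Y = (\<chi> a b. mtrace (\<Psi> (munit b a) ** Y))"

lemma dual_prop:
  assumes "mlinear \<Psi>"
  shows "mtrace (\<Psi> X ** Y) = mtrace (X ** dualmap \<Psi> Y)"
proof -
  have "mtrace (\<Psi> X ** Y) = (\<Sum>j\<in>UNIV. \<Sum>l\<in>UNIV. \<Sum>i\<in>UNIV. \<Sum>k\<in>UNIV. X$i$k * \<Psi> (munit i k) $ j $ l * Y$l$j)"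
    unfolding mtrace_mult mlinear_entry[OF assms, of X]
    by (simp add: sum_distrib_right)
  also have "\<dots> = (\<Sum>i\<in>UNIV. \<Sum>k\<in>UNIV. \<Sum>j\<in>UNIV. \<Sum>l\<in>UNIV. X$i$k * \<Psi> (munit i k) $ j $ l * Y$l$j)"
    by (rule sum4_swap)
  also have "\<dots> = mtrace (X ** dualmap \<Psi> Y)"
    unfolding mtrace_mult dualmap_def by (simp add: sum_distrib_left mult.assoc)
  finally show ?thesis .
qed

lemma dualmap_mlinear: "mlinear (dualmap \<Psi>)"
  unfolding mlinear_def dualmap_def
  by (simp add: vec_eq_iff mtrace_mult sum_distrib_left sum.distrib algebra_simps)

lemma map_dual_eq:
  assumes "mlinear \<Psi>"
  shows "map_dual \<Psi> = dualmap \<Psi>"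
  unfolding map_dual_def
proof (rule the_equality)
  show "mlinear (dualmap \<Psi>) \<and> (\<forall>X Y. mtrace (\<Psi> X ** Y) = mtrace (X ** dualmap \<Psi> Y))"
    using dualmap_mlinear dual_prop[OF assms] by blast
next
  fix D assume D: "mlinear D \<and> (\<forall>X Y. mtrace (\<Psi> X ** Y) = mtrace (X ** D Y))"
  show "D = dualmap \<Psi>"
  proof
    fix Y
    have "D Y $ a $ b = dualmap \<Psi> Y $ a $ b" for a b
      using D mtrace_munit[of b a "D Y"] mtrace_munit[of b a "dualmap \<Psi> Y"] dual_prop[OF assms, of "munit b a" Y]
      by metis
    then show "D Y = dualmap \<Psi> Y" by (simp add: vec_eq_iff)
  qed
qed

lemma choi_nth: "choi \<Phi> $ p $ q = \<Phi> (munit (fst p) (fst q)) $ snd p $ snd q"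
proof -
  have "choi \<Phi> $ p $ q = (\<Sum>i\<in>UNIV. \<Sum>j\<in>UNIV. if i = fst p then (if j = fst q then \<Phi> (munit i j) $ snd p $ snd q else 0) else 0)"
    unfolding choi_def kron_def by (simp add: sum_component) (rule sum.cong[OF refl], rule sum.cong[OF refl], auto)
  also have "\<dots> = \<Phi> (munit (fst p) (fst q)) $ snd p $ snd q" by (rule sum_delta2)
  finally show ?thesis .
qed

lemma sum_pair: "(\<Sum>p\<in>UNIV. f p) = (\<Sum>a\<in>UNIV. \<Sum>b\<in>UNIV. f (a,b))"
  by (simp add: sum.cartesian_product UNIV_Times_UNIV)

lemma ident:
  assumes "mlinear \<Psi>"
  shows "mtrace (choi \<Phi> ** choi \<Psi>) = (\<Sum>a\<in>UNIV. \<Sum>b\<in>UNIV. map_dual \<Psi> (\<Phi> (munit a b)) $ a $ b)"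
proof -
  have "mtrace (choi \<Phi> ** choi \<Psi>) = (\<Sum>i\<in>UNIV. \<Sum>a\<in>UNIV. \<Sum>j\<in>UNIV. \<Sum>b\<in>UNIV. \<Phi> (munit i j) $ a $ b * \<Psi> (munit j i) $ b $ a)"
    unfolding mtrace_mult choi_nth by (simp add: sum_pair)
  also have "\<dots> = (\<Sum>i\<in>UNIV. \<Sum>j\<in>UNIV. \<Sum>a\<in>UNIV. \<Sum>b\<in>UNIV. \<Phi> (munit i j) $ a $ b * \<Psi> (munit j i) $ b $ a)"
    by (rule sum4_mid)
  also have "\<dots> = (\<Sum>i\<in>UNIV. \<Sum>j\<in>UNIV. mtrace (\<Psi> (munit j i) ** \<Phi> (munit i j)))"
    by (simp add: mtrace_comm[of "\<Psi> _"]) (simp add: mtrace_mult)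
  also have "\<dots> = (\<Sum>i\<in>UNIV. \<Sum>j\<in>UNIV. map_dual \<Psi> (\<Phi> (munit i j)) $ i $ j)"
    by (simp add: map_dual_eq[OF assms] dual_prop[OF assms] mtrace_munit)
  finally show ?thesis .
qed



definition adm :: "'n::finite mat \<Rightarrow> 'n mat \<Rightarrow> 'n mat" where
  "adm K Y = (\<chi> a b. \<Sum>c\<in>UNIV. \<Sum>d\<in>UNIV. K$a$c * Y$c$d * cnj (K$b$d))"

lemma adm_nth: "adm K Y $ a $ b = (\<Sum>c\<in>UNIV. \<Sum>d\<in>UNIV. K$a$c * Y$c$d * cnj (K$b$d))"
  by (simp add: adm_def)

lemma adm_mlinear: "mlinear (adm K)"
  unfolding mlinear_def
  by (simp add: vec_eq_iff adm_nth sum_distrib_left sum.distrib algebra_simps)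

lemma cnj_sum': "cnj (\<Sum>x\<in>S. f x) = (\<Sum>x\<in>S. cnj (f x))"
  by (induction S rule: infinite_finite_induct) auto

lemma adm_block:
  fixes X K :: "'n::finite mat"
  defines "w \<equiv> \<lambda>u::complex^'n. (\<chi> c. \<Sum>a\<in>UNIV. cnj (K$a$c) * u $ a)"
  shows "(\<Sum>a\<in>UNIV. \<Sum>b\<in>UNIV. cnj (v $ a) * adm K X $ a $ b * u $ b)
       = (\<Sum>c\<in>UNIV. \<Sum>d\<in>UNIV. cnj (w v $ c) * X $ c $ d * w u $ d)"
proof -
  have "(\<Sum>a\<in>UNIV. \<Sum>b\<in>UNIV. cnj (v $ a) * adm K X $ a $ b * u $ b)
     = (\<Sum>a\<in>UNIV. \<Sum>b\<in>UNIV. \<Sum>c\<in>UNIV. \<Sum>d\<in>UNIV. cnj (v $ a) * K$a$c * X$c$d * cnj (K$b$d) * u $ b)"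
    by (simp add: adm_nth sum_distrib_left sum_distrib_right mult.assoc)
  also have "\<dots> = (\<Sum>c\<in>UNIV. \<Sum>d\<in>UNIV. \<Sum>a\<in>UNIV. \<Sum>b\<in>UNIV. cnj (v $ a) * K$a$c * X$c$d * cnj (K$b$d) * u $ b)"
    by (rule sum4_swap)
  also have "\<dots> = (\<Sum>c\<in>UNIV. \<Sum>d\<in>UNIV. cnj (w v $ c) * X $ c $ d * w u $ d)"
    unfolding w_def by (simp add: cnj_sum' sum_distrib_left sum_distrib_right algebra_simps)
  finally show ?thesis .
qed

lemma adm_CP: "adm K \<in> CP"
  unfolding CP_def completely_positive_def
proof (intro CollectI conjI allI impI adm_mlinear)
  fix k and X :: "nat \<Rightarrow> nat \<Rightarrow> 'a mat"
  assume X: "psd_blocks k X"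
  define w where "w \<equiv> \<lambda>u::complex^'a. (\<chi> c. \<Sum>a\<in>UNIV. cnj (K$a$c) * u $ a)"
  show "psd_blocks k (\<lambda>i j. adm K (X i j))"
    unfolding psd_blocks_def
  proof
    fix v :: "nat \<Rightarrow> complex^'a"
    have "cnonneg (\<Sum>i<k. \<Sum>j<k. \<Sum>a\<in>UNIV. \<Sum>b\<in>UNIV. cnj (w (v i) $ a) * X i j $ a $ b * w (v j) $ b)"
      using X[unfolded psd_blocks_def, rule_format, of "\<lambda>i. w (v i)"] by simp
    then show "cnonneg (\<Sum>i<k. \<Sum>j<k. \<Sum>a\<in>UNIV. \<Sum>b\<in>UNIV. cnj (v i $ a) * adm K (X i j) $ a $ b * v j $ b)"
      unfolding w_def adm_block by simp
  qed
qed



lemma adm_munit: "adm K (munit a b) $ c $ d = K$c$a * cnj (K$d$b)"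
proof -
  have "adm K (munit a b) $ c $ d = (\<Sum>c'\<in>UNIV. \<Sum>d'\<in>UNIV. if c' = a then if d' = b then K$c$c' * cnj (K$d$d') else 0 else 0)"
    unfolding adm_nth by (rule sum.cong[OF refl], rule sum.cong[OF refl]) auto
  also have "\<dots> = K$c$a * cnj (K$d$b)" by (rule sum_delta2)
  finally show ?thesis .
qed

lemma mlinear_entry_fun:
  assumes "mlinear L"
  shows "L (F i j) $ a $ b = (\<Sum>c\<in>UNIV. \<Sum>d\<in>UNIV. F i j $c$d * L (munit c d) $ a $ b)"
  by (rule mlinear_entry[OF assms])

lemma choi_psd:
  fixes L :: "'n::finite mat \<Rightarrow> 'n mat"
  assumes lin: "mlinear L" and pos: "\<And>K. 0 \<le> (\<Sum>a\<in>UNIV. \<Sum>b\<in>UNIV. L (adm K (munit a b)) $ a $ b)"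
  shows "psdk UNIV (\<lambda>p q. L (munit (fst p) (fst q)) $ snd p $ snd q)"
  unfolding psdk_def
proof
  fix z :: "'n \<times> 'n \<Rightarrow> complex"
  define K :: "'n mat" where "K = (\<chi> c a. cnj (z (c,a)))"
  have "(\<Sum>a\<in>UNIV. \<Sum>b\<in>UNIV. L (adm K (munit a b)) $ a $ b)
      = (\<Sum>a\<in>UNIV. \<Sum>b\<in>UNIV. \<Sum>c\<in>UNIV. \<Sum>d\<in>UNIV. cnj (z (c,a)) * L (munit c d) $ a $ b * z (d,b))"
  proof -
    have ent: "L (adm K (munit a b)) $ a $ b = (\<Sum>c\<in>UNIV. \<Sum>d\<in>UNIV. adm K (munit a b) $c$d * L (munit c d) $ a $ b)" for a b
      by (rule mlinear_entry[OF lin])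
    show ?thesis unfolding ent adm_munit by (simp add: K_def algebra_simps)
  qed
  also have "\<dots> = (\<Sum>c\<in>UNIV. \<Sum>d\<in>UNIV. \<Sum>a\<in>UNIV. \<Sum>b\<in>UNIV. cnj (z (c,a)) * L (munit c d) $ a $ b * z (d,b))"
    by (rule sum4_swap)
  also have "\<dots> = (\<Sum>c\<in>UNIV. \<Sum>a\<in>UNIV. \<Sum>d\<in>UNIV. \<Sum>b\<in>UNIV. cnj (z (c,a)) * L (munit c d) $ a $ b * z (d,b))"
    by (rule sum4_mid)
  also have "\<dots> = qform UNIV (\<lambda>p q. L (munit (fst p) (fst q)) $ snd p $ snd q) z"
    unfolding qform_def sum_pair by simp
  finally show "0 \<le> qform UNIV (\<lambda>p q. L (munit (fst p) (fst q)) $ snd p $ snd q) z"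
    using pos[of K] by simp
qed

lemma blocks_pos:
  fixes L :: "'n::finite mat \<Rightarrow> 'n mat"
  assumes lin: "mlinear L" and ch: "psdk UNIV (\<lambda>p q. L (munit (fst p) (fst q)) $ snd p $ snd q)"
    and X: "psd_blocks k X"
  shows "psd_blocks k (\<lambda>i j. L (X i j))"
  unfolding psd_blocks_def cnonneg_iff
proof
  fix v :: "nat \<Rightarrow> complex^'n"
  define Ch where "Ch = (\<lambda>p q. L (munit (fst p) (fst q)) $ snd p $ snd q)"
  define M where "M = (\<lambda>(p::'n\<times>'n) (q::'n\<times>'n). \<Sum>i<k. \<Sum>j<k. cnj (v i $ snd p) * X i j $ fst p $ fst q * v j $ snd q)"
  have step2: "(\<Sum>i<k. \<Sum>j<k. cnj (v i $ a) * L (X i j) $ a $ b * v j $ b)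
      = (\<Sum>c\<in>UNIV. \<Sum>d\<in>UNIV. Ch (c,a) (d,b) * M (c,a) (d,b))" for a b
  proof -
    have "(\<Sum>i<k. \<Sum>j<k. cnj (v i $ a) * L (X i j) $ a $ b * v j $ b)
       = (\<Sum>i<k. \<Sum>j<k. \<Sum>c\<in>UNIV. \<Sum>d\<in>UNIV. L (munit c d) $ a $ b * (cnj (v i $ a) * X i j $ c $ d * v j $ b))"
      unfolding mlinear_entry_fun[OF lin, of X] by (simp add: sum_distrib_left sum_distrib_right algebra_simps)
    also have "\<dots> = (\<Sum>c\<in>UNIV. \<Sum>d\<in>UNIV. \<Sum>i<k. \<Sum>j<k. L (munit c d) $ a $ b * (cnj (v i $ a) * X i j $ c $ d * v j $ b))"
      by (rule sum4_swap)
    also have "\<dots> = (\<Sum>c\<in>UNIV. \<Sum>d\<in>UNIV. Ch (c,a) (d,b) * M (c,a) (d,b))"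
      unfolding Ch_def M_def by (simp add: sum_distrib_left)
    finally show ?thesis .
  qed
  have "(\<Sum>i<k. \<Sum>j<k. \<Sum>a\<in>UNIV. \<Sum>b\<in>UNIV. cnj (v i $ a) * L (X i j) $ a $ b * v j $ b)
      = (\<Sum>a\<in>UNIV. \<Sum>b\<in>UNIV. \<Sum>i<k. \<Sum>j<k. cnj (v i $ a) * L (X i j) $ a $ b * v j $ b)"
    by (rule sum4_swap)
  also have "\<dots> = (\<Sum>a\<in>UNIV. \<Sum>b\<in>UNIV. \<Sum>c\<in>UNIV. \<Sum>d\<in>UNIV. Ch (c,a) (d,b) * M (c,a) (d,b))"
    by (simp add: step2)
  also have "\<dots> = (\<Sum>c\<in>UNIV. \<Sum>d\<in>UNIV. \<Sum>a\<in>UNIV. \<Sum>b\<in>UNIV. Ch (c,a) (d,b) * M (c,a) (d,b))"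
    by (rule sum4_swap)
  also have "\<dots> = (\<Sum>c\<in>UNIV. \<Sum>a\<in>UNIV. \<Sum>d\<in>UNIV. \<Sum>b\<in>UNIV. Ch (c,a) (d,b) * M (c,a) (d,b))"
    by (rule sum4_mid)
  also have "\<dots> = (\<Sum>p\<in>UNIV. \<Sum>q\<in>UNIV. Ch p q * M p q)"
    unfolding sum_pair by simp
  finally have eq: "(\<Sum>i<k. \<Sum>j<k. \<Sum>a\<in>UNIV. \<Sum>b\<in>UNIV. cnj (v i $ a) * L (X i j) $ a $ b * v j $ b)
      = (\<Sum>p\<in>UNIV. \<Sum>q\<in>UNIV. Ch p q * M p q)" .
  have pM: "psdk UNIV M"
    unfolding psdk_def
  proof
    fix z :: "'n\<times>'n \<Rightarrow> complex"
    define w where "w = (\<lambda>i. \<chi> c. \<Sum>a\<in>UNIV. z (c,a) * v i $ a)"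
    have "qform UNIV M z = (\<Sum>c\<in>UNIV. \<Sum>a\<in>UNIV. \<Sum>d\<in>UNIV. \<Sum>b\<in>UNIV. \<Sum>i<k. \<Sum>j<k.
             cnj (z (c,a)) * (cnj (v i $ a) * X i j $ c $ d * v j $ b) * z (d,b))"
      unfolding qform_def M_def sum_pair by (simp add: sum_distrib_left sum_distrib_right)
    also have "\<dots> = (\<Sum>c\<in>UNIV. \<Sum>d\<in>UNIV. \<Sum>a\<in>UNIV. \<Sum>b\<in>UNIV. \<Sum>i<k. \<Sum>j<k.
             cnj (z (c,a)) * (cnj (v i $ a) * X i j $ c $ d * v j $ b) * z (d,b))"
      by (rule sum4_mid)
    also have "\<dots> = (\<Sum>c\<in>UNIV. \<Sum>d\<in>UNIV. \<Sum>i<k. \<Sum>j<k. \<Sum>a\<in>UNIV. \<Sum>b\<in>UNIV.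
             cnj (z (c,a)) * (cnj (v i $ a) * X i j $ c $ d * v j $ b) * z (d,b))"
      by (rule sum.cong[OF refl], rule sum.cong[OF refl], rule sum4_swap)
    also have "\<dots> = (\<Sum>i<k. \<Sum>j<k. \<Sum>c\<in>UNIV. \<Sum>d\<in>UNIV. \<Sum>a\<in>UNIV. \<Sum>b\<in>UNIV.
             cnj (z (c,a)) * (cnj (v i $ a) * X i j $ c $ d * v j $ b) * z (d,b))"
      by (rule sum4_swap)
    also have "\<dots> = (\<Sum>i<k. \<Sum>j<k. \<Sum>c\<in>UNIV. \<Sum>d\<in>UNIV. cnj (w i $ c) * X i j $ c $ d * w j $ d)"
      unfolding w_def by (simp add: cnj_sum' sum_distrib_left sum_distrib_right algebra_simps)
    finally show "0 \<le> qform UNIV M z"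
      using X[unfolded psd_blocks_def, rule_format, of w] by (simp add: cnonneg_iff)
  qed
  show "0 \<le> (\<Sum>i<k. \<Sum>j<k. \<Sum>a\<in>UNIV. \<Sum>b\<in>UNIV. cnj (v i $ a) * L (X i j) $ a $ b * v j $ b)"
    unfolding eq using schur[of UNIV Ch M] ch pM unfolding Ch_def by simp
qed



lemma delta_ab:
  fixes F G :: "'n::finite \<Rightarrow> complex"
  shows "(\<Sum>a\<in>UNIV. \<Sum>b\<in>UNIV. F a * (if a = x \<and> b = y then 1 else 0) * G b) = F x * G y"
proof -
  have "(\<Sum>a\<in>UNIV. \<Sum>b\<in>UNIV. F a * (if a = x \<and> b = y then 1 else 0) * G b)
      = (\<Sum>a\<in>UNIV. \<Sum>b\<in>UNIV. if a = x then if b = y then F a * G b else 0 else 0)"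
    by (rule sum.cong[OF refl], rule sum.cong[OF refl]) auto
  also have "\<dots> = F x * G y" by (rule sum_delta2)
  finally show ?thesis .
qed

lemma delta_ab2:
  fixes M :: "'n::finite mat"
  shows "(\<Sum>a\<in>UNIV. \<Sum>b\<in>UNIV. cnj ((\<chi> a. if a = x then 1 else 0) $ a) * M $ a $ b * (\<chi> a. if a = y then 1 else 0) $ b) = M $ x $ y"
proof -
  have "(\<Sum>a\<in>UNIV. \<Sum>b\<in>UNIV. cnj ((\<chi> a. if a = x then 1 else 0) $ a) * M $ a $ b * (\<chi> a. if a = y then 1 else 0) $ b)
      = (\<Sum>a\<in>UNIV. \<Sum>b\<in>UNIV. if a = x then if b = y then M $ a $ b else 0 else 0)"
    by (rule sum.cong[OF refl], rule sum.cong[OF refl]) auto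
  also have "\<dots> = M $ x $ y" by (rule sum_delta2)
  finally show ?thesis .
qed

lemma cnj_mult_self_nonneg: "0 \<le> cnj s * (s::complex)"
  by (simp add: less_eq_complex_def)

lemma cp_trace_nonneg:
  fixes L :: "'n::finite mat \<Rightarrow> 'n mat"
  assumes "L \<in> CP"
  shows "0 \<le> (\<Sum>a\<in>UNIV. \<Sum>b\<in>UNIV. L (munit a b) $ a $ b)"
proof -
  obtain h where h: "bij_betw h {0..<CARD('n)} (UNIV::'n set)"
    using ex_bij_betw_nat_finite[of "UNIV::'n set"] by auto
  define k where "k = CARD('n)"
  have kset: "{..<k} = {0..<CARD('n)}" unfolding k_def by auto
  define X where "X = (\<lambda>i j. munit (h i) (h j) :: 'n mat)"
  have psd: "psd_blocks k X"
    unfolding psd_blocks_def cnonneg_iff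
  proof
    fix v :: "nat \<Rightarrow> complex^'n"
    have "(\<Sum>i<k. \<Sum>j<k. \<Sum>a\<in>UNIV. \<Sum>b\<in>UNIV. cnj (v i $ a) * X i j $ a $ b * v j $ b)
        = (\<Sum>i<k. \<Sum>j<k. cnj (v i $ h i) * v j $ h j)"
      unfolding X_def munit_nth delta_ab[of "\<lambda>a. cnj (v _ $ a)"] by simp
    also have "\<dots> = cnj (\<Sum>i<k. v i $ h i) * (\<Sum>j<k. v j $ h j)"
      by (simp add: cnj_sum' sum_product)
    finally show "0 \<le> (\<Sum>i<k. \<Sum>j<k. \<Sum>a\<in>UNIV. \<Sum>b\<in>UNIV. cnj (v i $ a) * X i j $ a $ b * v j $ b)"
      using cnj_mult_self_nonneg[of "\<Sum>j<k. v j $ h j"] by (simp only: cnj_sum')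
  qed
  have "psd_blocks k (\<lambda>i j. L (X i j))"
    using assms psd unfolding CP_def completely_positive_def by blast
  then have "cnonneg (\<Sum>i<k. \<Sum>j<k. \<Sum>a\<in>UNIV. \<Sum>b\<in>UNIV.
      cnj ((\<chi> a. if a = h i then 1 else 0) $ a) * L (X i j) $ a $ b * (\<chi> a. if a = h j then 1 else 0) $ b)"
    unfolding psd_blocks_def by (rule allE[where x="\<lambda>i. \<chi> a. if a = h i then 1 else 0"])
  then have "0 \<le> (\<Sum>i\<in>{0..<CARD('n)}. \<Sum>j\<in>{0..<CARD('n)}. L (munit (h i) (h j)) $ h i $ h j)"
    unfolding delta_ab2 cnonneg_iff kset X_def .
  also have "(\<Sum>i\<in>{0..<CARD('n)}. \<Sum>j\<in>{0..<CARD('n)}. L (munit (h i) (h j)) $ h i $ h j)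
      = (\<Sum>a\<in>UNIV. \<Sum>b\<in>UNIV. L (munit a b) $ a $ b)"
  proof -
    have r: "(\<Sum>i\<in>{0..<CARD('n)}. g (h i)) = (\<Sum>a\<in>UNIV. g a)" for g :: "'n \<Rightarrow> complex"
      by (rule sum.reindex_bij_betw[OF h])
    have r1: "(\<Sum>j\<in>{0..<CARD('n)}. L (munit x (h j)) $ x $ h j) = (\<Sum>b\<in>UNIV. L (munit x b) $ x $ b)" for x
      using r[of "\<lambda>b. L (munit x b) $ x $ b"] by simp
    have r2: "(\<Sum>i\<in>{0..<CARD('n)}. \<Sum>b\<in>UNIV. L (munit (h i) b) $ h i $ b) = (\<Sum>a\<in>UNIV. \<Sum>b\<in>UNIV. L (munit a b) $ a $ b)"
      using r[of "\<lambda>a. \<Sum>b\<in>UNIV. L (munit a b) $ a $ b"] by simp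
    show ?thesis by (simp only: r1 r2)
  qed
  finally show ?thesis .
qed

theorem proposition4p1:
  fixes C :: "('n::finite mat \<Rightarrow> 'n mat) set" and \<Psi> :: "'n mat \<Rightarrow> 'n mat"
  assumes "convex_map_cone C" and "right_CP_invariant C" and "mlinear \<Psi>"
  shows "(\<forall>\<Phi>\<in>C. map_dual \<Psi> \<circ> \<Phi> \<in> CP) \<longleftrightarrow> \<Psi> \<in> dual_cone C"
proof
  assume H: "\<forall>\<Phi>\<in>C. map_dual \<Psi> \<circ> \<Phi> \<in> CP"
  show "\<Psi> \<in> dual_cone C"
    unfolding dual_cone_def
  proof (intro CollectI conjI ballI)
    show "mlinear \<Psi>" by (rule assms(3))
    fix \<Phi> assume "\<Phi> \<in> C"
    then have "0 \<le> (\<Sum>a\<in>UNIV. \<Sum>b\<in>UNIV. (map_dual \<Psi> \<circ> \<Phi>) (munit a b) $ a $ b)"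
      using H cp_trace_nonneg by blast
    then show "cnonneg (mtrace (choi \<Phi> ** choi \<Psi>))"
      unfolding cnonneg_iff ident[OF assms(3)] by simp
  qed
next
  assume D: "\<Psi> \<in> dual_cone C"
  show "\<forall>\<Phi>\<in>C. map_dual \<Psi> \<circ> \<Phi> \<in> CP"
  proof
    fix \<Phi> assume P: "\<Phi> \<in> C"
    define L where "L = map_dual \<Psi> \<circ> \<Phi>"
    have linP: "mlinear \<Phi>" using P assms(1) unfolding convex_map_cone_def by blast
    have linL: "mlinear L"
      using linP dualmap_mlinear[of \<Psi>] unfolding L_def map_dual_eq[OF assms(3)] mlinear_def by simp
    have pos: "0 \<le> (\<Sum>a\<in>UNIV. \<Sum>b\<in>UNIV. L (adm K (munit a b)) $ a $ b)" for K
    proof -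
      have "\<Phi> \<circ> adm K \<in> C" using assms(2) P adm_CP unfolding right_CP_invariant_def by blast
      then have "cnonneg (mtrace (choi (\<Phi> \<circ> adm K) ** choi \<Psi>))"
        using D unfolding dual_cone_def by blast
      then show ?thesis unfolding cnonneg_iff ident[OF assms(3)] L_def by simp
    qed
    have ch: "psdk UNIV (\<lambda>p q. L (munit (fst p) (fst q)) $ snd p $ snd q)"
      by (rule choi_psd[OF linL pos])
    show "map_dual \<Psi> \<circ> \<Phi> \<in> CP"
      unfolding L_def[symmetric] CP_def completely_positive_def
      using linL blocks_pos[OF linL ch] by blast
  qed
qed

end
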